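(* Let $C$ and $\bar{C}$ be categories, each with a final object ($pt$, resp. $\bar{pt}$), fiber products, a class of confined maps, a class of independent squares and a class of allowable maps (all as described in the context), let $\bar{\ }: C\to\bar{C}$ be a functor respecting these structures, and let $F$ be a partial weak bivariant theory on $C$ and $H$ a partial weak bivariant theory on $\bar{C}$. Assume every map $X\to pt$ in $C$ (resp. $\bar X\to\bar{pt}$ in $\bar C$) is allowable, that $F_*(pt):=F(pt\to pt)$ contains an element $1_{pt}$ with $\alpha\bullet 1_{pt}=\alpha$ for all $\alpha\in F_*(X):=F(X\to pt)$ and all $X$, similarly $1_{\bar{pt}}\in H_*(\bar{pt})$ for $H$, and that every commutative square whose horizontal maps are identities (i.e. $g=\mathrm{id}_Y$, $g'=\mathrm{id}_X$, vertical maps both equal to some $f$) is independent. Let $c_*:F_*\to H_*$ be a natural transformation of the associated covariant theories (i.e. a family of homomorphisms $c_*:F(X\to pt)\to H(\bar X\to\bar{pt})$ with $c_*\circ f_*=\bar f_*\circ c_*$ for confined $f$) with $c_*(1_{pt})=1_{\bar{pt}}$. Fix a class of orientable objects of $C$ containing $pt$, with distinguished elements $e_Y\in F_*(Y)$ such that $c_*(e_Y)$ is a strong orientation in $H$ and $e_{pt}=1_{pt}$, and for each o-allowable $f:X\to Y$ let $\gamma_f:F(f:X\to Y)\to H(\bar f:\bar X\to\bar Y)$ be the unique homomorphism with $c_*(\alpha\bullet e_Y)=\gamma_f(\alpha)\,\bar\bullet\,c_*(e_Y)$ for all $\alpha$. Let $f:X\to Y$ be o-allowable and let $\alpha\in F(f:X\to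 Y)$ satisfy $c_*(\alpha\bullet\beta)=\gamma_f(\alpha)\,\bar\bullet\,c_*(\beta)$ for every $\beta\in F_*(Y)$. Then for every o-allowable $g:Y\to Z$ and every $\beta\in F(g:Y\to Z)$ one has $$\gamma_{g\circ f}(\alpha\bullet\beta)=\gamma_f(\alpha)\,\bar\bullet\,\gamma_g(\beta).$$
   Context: Setting (following Fulton–MacPherson). A category $C$ has a final object $pt$ and fiber products, a class of confined maps (closed under composition and base change, containing identities) and a class of independent squares (fiber squares, closed under vertical and horizontal composition, containing every square, or its transpose, whose two parallel sides are identity maps). A class of allowable maps is closed under composition and such that $g\circ f$ is allowable whenever $f$ is confined and $g$ allowable. A partial weak bivariant theory $T$ assigns to each allowable $f:X\to Y$ an abelian group $T(f:X\to Y)$ with: a product $\bullet:T(f:X\to Y)\times T(g:Y\to Z)\to T(g\circ f:X\to Z)$ (for $f,g$ allowable); a push-forward $f_*:T(g\circ f:X\to Z)\to T(g:Y\to Z)$ for $f$ confined and $g$ allowable; a pull-back $g^*:T(f:X\to Y)\to T(f':X'\to Y')$ for every independent square with $X'\to X$ over $g:Y'\to Y$ and $f,f'$ allowable; satisfying, for allowable maps, associativity of product, functoriality of push-forward and pull-back, and compatibility of product with push-forward, of product with pull-back, and of push-forward with pull-back (the bivariant projection formula is not required). A functor $\bar{\ }:C\to\bar C$ "respecting the structures" preserves final objects, confined maps, independent squares and allowable maps. For $H$ on $\bar C$, an element $\theta\in H(g:Y\to Z)$ is a strong orientation if $-\bullet\theta: H(f':X'\to Y)\to H(g\circ f':X'\to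 Z)$ is an isomorphism for all $f':X'\to Y$ (with the relevant maps allowable). A morphism $f:X\to Y$ of $C$ is o-allowable if it is allowable and $Y$ is orientable. The product in $H$ is written $\bar\bullet$. *)

theory Defs
  imports "HOL-Algebra.Group"
begin

text \<open>Composition convention: cmp C g f = g o f.
A square (f, g, f', g') denotes
   X' --g'--> X
   |f'        |f
   Y' --g-->  Y
i.e. f: X -> Y, g: Y' -> Y, f': X' -> Y', g': X' -> X.\<close>

record ('o, 'm) fmcat =
  obj :: "'o set"
  mor :: "'m set"
  src :: "'m \<Rightarrow> 'o"
  tgt :: "'m \<Rightarrow> 'o"
  cmp :: "'m \<Rightarrow> 'm \<Rightarrow> 'm"
  ident :: "'o \<Rightarrow> 'm"
  pt :: "'o"
  confined :: "'m set"
  indep :: "('m \<times> 'm \<times> 'm \<times> 'm) set"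
  allowable :: "'m set"

definition arr :: "('o, 'm, 'x) fmcat_scheme \<Rightarrow> 'm \<Rightarrow> 'o \<Rightarrow> 'o \<Rightarrow> bool" where
  "arr C m X Y \<longleftrightarrow> m \<in> mor C \<and> src C m = X \<and> tgt C m = Y"

definition is_category :: "('o, 'm, 'x) fmcat_scheme \<Rightarrow> bool" where
  "is_category C \<longleftrightarrow>
     (\<forall>m\<in>mor C. src C m \<in> obj C \<and> tgt C m \<in> obj C) \<and>
     (\<forall>X\<in>obj C. arr C (ident C X) X X) \<and>
     (\<forall>f\<in>mor C. \<forall>g\<in>mor C. tgt C f = src C g \<longrightarrow>
          arr C (cmp C g f) (src C f) (tgt C g)) \<and>
     (\<forall>f\<in>mor C. cmp C (ident C (tgt C f)) f = f \<and> cmp C f (ident C (src C f)) = f) \<and>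
     (\<forall>f\<in>mor C. \<forall>g\<in>mor C. \<forall>h\<in>mor C. tgt C f = src C g \<and> tgt C g = src C h \<longrightarrow>
          cmp C h (cmp C g f) = cmp C (cmp C h g) f)"

definition has_final_object :: "('o, 'm, 'x) fmcat_scheme \<Rightarrow> bool" where
  "has_final_object C \<longleftrightarrow> pt C \<in> obj C \<and> (\<forall>X\<in>obj C. \<exists>!m. arr C m X (pt C))"

definition termap :: "('o, 'm, 'x) fmcat_scheme \<Rightarrow> 'o \<Rightarrow> 'm" where
  "termap C X = (THE m. arr C m X (pt C))"

definition commsq :: "('o, 'm, 'x) fmcat_scheme \<Rightarrow> 'm \<times> 'm \<times> 'm \<times> 'm \<Rightarrow> bool" where
  "commsq C s = (case s of (f, g, f', g') \<Rightarrow>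
     f \<in> mor C \<and> g \<in> mor C \<and> f' \<in> mor C \<and> g' \<in> mor C \<and>
     tgt C f = tgt C g \<and> src C f = tgt C g' \<and> src C f' = src C g' \<and> tgt C f' = src C g \<and>
     cmp C f g' = cmp C g f')"

definition fiber_square :: "('o, 'm, 'x) fmcat_scheme \<Rightarrow> 'm \<times> 'm \<times> 'm \<times> 'm \<Rightarrow> bool" where
  "fiber_square C s = (case s of (f, g, f', g') \<Rightarrow>
     commsq C (f, g, f', g') \<and>
     (\<forall>W\<in>obj C. \<forall>a b. arr C a W (src C f) \<and> arr C b W (src C g) \<and> cmp C f a = cmp C g b \<longrightarrow>
        (\<exists>!u. arr C u W (src C f') \<and> cmp C g' u = a \<and> cmp C f' u = b)))"

definition has_fiber_products :: "('o, 'm, 'x) fmcat_scheme \<Rightarrow> bool" where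
  "has_fiber_products C \<longleftrightarrow>
     (\<forall>f\<in>mor C. \<forall>g\<in>mor C. tgt C f = tgt C g \<longrightarrow> (\<exists>f' g'. fiber_square C (f, g, f', g')))"

definition confined_ok :: "('o, 'm, 'x) fmcat_scheme \<Rightarrow> bool" where
  "confined_ok C \<longleftrightarrow>
     confined C \<subseteq> mor C \<and>
     (\<forall>f\<in>confined C. \<forall>g\<in>confined C. tgt C f = src C g \<longrightarrow> cmp C g f \<in> confined C) \<and>
     (\<forall>f g f' g'. f \<in> confined C \<and> fiber_square C (f, g, f', g') \<longrightarrow> f' \<in> confined C) \<and>
     (\<forall>X\<in>obj C. ident C X \<in> confined C)"

definition indep_ok :: "('o, 'm, 'x) fmcat_scheme \<Rightarrow> bool" where
  "indep_ok C \<longleftrightarrow>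
     (\<forall>s\<in>indep C. fiber_square C s) \<and>
     \<comment> \<open>horizontal composition\<close>
     (\<forall>f g f' g' h f'' h'. (f, g, f', g') \<in> indep C \<and> (f', h, f'', h') \<in> indep C \<longrightarrow>
          (f, cmp C g h, f'', cmp C g' h') \<in> indep C) \<and>
     \<comment> \<open>vertical composition\<close>
     (\<forall>f1 g f1' g' f2 k f2'. (f1, g, f1', g') \<in> indep C \<and> (f2, k, f2', g) \<in> indep C \<longrightarrow>
          (cmp C f2 f1, k, cmp C f2' f1', g') \<in> indep C) \<and>
     \<comment> \<open>squares (or transposes) with two parallel sides identities\<close>
     (\<forall>f\<in>mor C. (f, ident C (tgt C f), f, ident C (src C f)) \<in> indep C \<and>
                 (ident C (tgt C f), f, ident C (src C f), f) \<in> indep C)"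

definition allowable_ok :: "('o, 'm, 'x) fmcat_scheme \<Rightarrow> bool" where
  "allowable_ok C \<longleftrightarrow>
     allowable C \<subseteq> mor C \<and>
     (\<forall>f\<in>allowable C. \<forall>g\<in>allowable C. tgt C f = src C g \<longrightarrow> cmp C g f \<in> allowable C) \<and>
     (\<forall>f\<in>confined C. \<forall>g\<in>allowable C. tgt C f = src C g \<longrightarrow> cmp C g f \<in> allowable C)"

definition fm_category :: "('o, 'm, 'x) fmcat_scheme \<Rightarrow> bool" where
  "fm_category C \<longleftrightarrow> is_category C \<and> has_final_object C \<and> has_fiber_products C \<and>
     confined_ok C \<and> indep_ok C \<and> allowable_ok C"

definition respecting_functor ::
  "('o, 'm, 'x) fmcat_scheme \<Rightarrow> ('p, 'n, 'y) fmcat_scheme \<Rightarrow> ('o \<Rightarrow> 'p) \<Rightarrow> ('m \<Rightarrow> 'n) \<Rightarrow> bool" where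
  "respecting_functor C D Fo Fm \<longleftrightarrow>
     (\<forall>X\<in>obj C. Fo X \<in> obj D) \<and>
     (\<forall>f\<in>mor C. arr D (Fm f) (Fo (src C f)) (Fo (tgt C f))) \<and>
     (\<forall>f\<in>mor C. \<forall>g\<in>mor C. tgt C f = src C g \<longrightarrow> Fm (cmp C g f) = cmp D (Fm g) (Fm f)) \<and>
     (\<forall>X\<in>obj C. Fm (ident C X) = ident D (Fo X)) \<and>
     Fo (pt C) = pt D \<and>
     (\<forall>f\<in>confined C. Fm f \<in> confined D) \<and>
     (\<forall>f g f' g'. (f, g, f', g') \<in> indep C \<longrightarrow> (Fm f, Fm g, Fm f', Fm g') \<in> indep D) \<and>
     (\<forall>f\<in>allowable C. Fm f \<in> allowable D)"

text \<open>grp T f is the abelian group T(f) (written multiplicatively, HOL-Algebra);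
bprod T f g is the product T(f) x T(g) -> T(g o f); bpush T f g is f_* : T(g o f) -> T(g);
bpull T s is the pull-back along the independent square s = (f, g, f', g'): T(f) -> T(f').\<close>

record ('m, 'a) bvt =
  grp :: "'m \<Rightarrow> 'a monoid"
  bprod :: "'m \<Rightarrow> 'm \<Rightarrow> 'a \<Rightarrow> 'a \<Rightarrow> 'a"
  bpush :: "'m \<Rightarrow> 'm \<Rightarrow> 'a \<Rightarrow> 'a"
  bpull :: "'m \<times> 'm \<times> 'm \<times> 'm \<Rightarrow> 'a \<Rightarrow> 'a"

definition pwbt :: "('o, 'm, 'x) fmcat_scheme \<Rightarrow> ('m, 'a, 'z) bvt_scheme \<Rightarrow> bool" where
  "pwbt C T \<longleftrightarrow>
     (\<forall>f\<in>allowable C. comm_group (grp T f)) \<and>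
     \<comment> \<open>product: well-defined and bilinear\<close>
     (\<forall>f\<in>allowable C. \<forall>g\<in>allowable C. tgt C f = src C g \<longrightarrow>
        (\<forall>a\<in>carrier (grp T f). \<forall>b\<in>carrier (grp T g). bprod T f g a b \<in> carrier (grp T (cmp C g f))) \<and>
        (\<forall>a\<in>carrier (grp T f). (\<lambda>b. bprod T f g a b) \<in> hom (grp T g) (grp T (cmp C g f))) \<and>
        (\<forall>b\<in>carrier (grp T g). (\<lambda>a. bprod T f g a b) \<in> hom (grp T f) (grp T (cmp C g f)))) \<and>
     \<comment> \<open>push-forward: homomorphism\<close>
     (\<forall>f\<in>confined C. \<forall>g\<in>allowable C. tgt C f = src C g \<longrightarrow>
        bpush T f g \<in> hom (grp T (cmp C g f)) (grp T g)) \<and>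
     \<comment> \<open>pull-back: homomorphism\<close>
     (\<forall>f g f' g'. (f, g, f', g') \<in> indep C \<and> f \<in> allowable C \<and> f' \<in> allowable C \<longrightarrow>
        bpull T (f, g, f', g') \<in> hom (grp T f) (grp T f')) \<and>
     \<comment> \<open>associativity of product\<close>
     (\<forall>f\<in>allowable C. \<forall>g\<in>allowable C. \<forall>h\<in>allowable C.
        tgt C f = src C g \<and> tgt C g = src C h \<longrightarrow>
        (\<forall>a\<in>carrier (grp T f). \<forall>b\<in>carrier (grp T g). \<forall>c\<in>carrier (grp T h).
           bprod T (cmp C g f) h (bprod T f g a b) c = bprod T f (cmp C h g) a (bprod T g h b c))) \<and>
     \<comment> \<open>functoriality of push-forward\<close>
     (\<forall>f\<in>confined C. \<forall>g\<in>confined C. \<forall>h\<in>allowable C.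
        tgt C f = src C g \<and> tgt C g = src C h \<longrightarrow>
        (\<forall>a\<in>carrier (grp T (cmp C h (cmp C g f))).
           bpush T (cmp C g f) h a = bpush T g h (bpush T f (cmp C h g) a))) \<and>
     (\<forall>h\<in>allowable C. \<forall>a\<in>carrier (grp T h). bpush T (ident C (src C h)) h a = a) \<and>
     \<comment> \<open>functoriality of pull-back\<close>
     (\<forall>f g f' g' h f'' h'. (f, g, f', g') \<in> indep C \<and> (f', h, f'', h') \<in> indep C \<and>
        f \<in> allowable C \<and> f' \<in> allowable C \<and> f'' \<in> allowable C \<longrightarrow>
        (\<forall>a\<in>carrier (grp T f).
           bpull T (f, cmp C g h, f'', cmp C g' h') a = bpull T (f', h, f'', h') (bpull T (f, g, f', g') a))) \<and>
     (\<forall>f\<in>allowable C. \<forall>a\<in>carrier (grp T f).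
        bpull T (f, ident C (tgt C f), f, ident C (src C f)) a = a) \<and>
     \<comment> \<open>product and push-forward\<close>
     (\<forall>f\<in>confined C. \<forall>g\<in>allowable C. \<forall>h\<in>allowable C.
        tgt C f = src C g \<and> tgt C g = src C h \<longrightarrow>
        (\<forall>a\<in>carrier (grp T (cmp C g f)). \<forall>b\<in>carrier (grp T h).
           bprod T g h (bpush T f g a) b = bpush T f (cmp C h g) (bprod T (cmp C g f) h a b))) \<and>
     \<comment> \<open>product and pull-back\<close>
     (\<forall>f h' f' h'' g h g'. (f, h', f', h'') \<in> indep C \<and> (g, h, g', h') \<in> indep C \<and>
        f \<in> allowable C \<and> g \<in> allowable C \<and> f' \<in> allowable C \<and> g' \<in> allowable C \<longrightarrow>
        (\<forall>a\<in>carrier (grp T f). \<forall>b\<in>carrier (grp T g).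
           bpull T (cmp C g f, h, cmp C g' f', h'') (bprod T f g a b) =
           bprod T f' g' (bpull T (f, h', f', h'') a) (bpull T (g, h, g', h') b))) \<and>
     \<comment> \<open>push-forward and pull-back\<close>
     (\<forall>f h' f' h'' g h g'. (f, h', f', h'') \<in> indep C \<and> (g, h, g', h') \<in> indep C \<and>
        f \<in> confined C \<and> g \<in> allowable C \<and> g' \<in> allowable C \<longrightarrow>
        (\<forall>a\<in>carrier (grp T (cmp C g f)).
           bpush T f' g' (bpull T (cmp C g f, h, cmp C g' f', h'') a) = bpull T (g, h, g', h') (bpush T f g a)))"

definition strong_orientation ::
  "('o, 'm, 'x) fmcat_scheme \<Rightarrow> ('m, 'a, 'z) bvt_scheme \<Rightarrow> 'm \<Rightarrow> 'a \<Rightarrow> bool" where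
  "strong_orientation C T g \<theta> \<longleftrightarrow>
     \<theta> \<in> carrier (grp T g) \<and>
     (\<forall>f'\<in>allowable C. tgt C f' = src C g \<longrightarrow>
        (\<lambda>a. bprod T f' g a \<theta>) \<in> iso (grp T f') (grp T (cmp C g f')))"

end

theory Submission
  imports Defs
begin

theorem mainTheorem1:
  fixes C :: "('o, 'm) fmcat" and D :: "('p, 'n) fmcat"
    and Fo :: "'o \<Rightarrow> 'p" and Fm :: "'m \<Rightarrow> 'n"
    and F :: "('m, 'a) bvt" and H :: "('n, 'b) bvt"
    and oneF :: 'a and oneH :: 'b
    and c :: "'o \<Rightarrow> 'a \<Rightarrow> 'b"
    and Or :: "'o set" and e :: "'o \<Rightarrow> 'a"
    and \<gamma> :: "'m \<Rightarrow> 'a \<Rightarrow> 'b"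
    and f g :: 'm and \<alpha> \<beta> :: 'a
  assumes C: "fm_category C" and D: "fm_category D"
    and fun_resp: "respecting_functor C D Fo Fm"
    and F: "pwbt C F" and H: "pwbt D H"
    and term_allowC: "\<forall>X\<in>obj C. termap C X \<in> allowable C"
    and term_allowD: "\<forall>X\<in>obj D. termap D X \<in> allowable D"
    and oneF: "oneF \<in> carrier (grp F (termap C (pt C)))"
    and oneF_unit: "\<forall>X\<in>obj C. \<forall>a\<in>carrier (grp F (termap C X)).
                      bprod F (termap C X) (termap C (pt C)) a oneF = a"
    and oneH: "oneH \<in> carrier (grp H (termap D (pt D)))"
    and oneH_unit: "\<forall>X\<in>obj D. \<forall>a\<in>carrier (grp H (termap D X)).
                      bprod H (termap D X) (termap D (pt D)) a oneH = a"
    and idsqC: "\<forall>h\<in>mor C. (h, ident C (tgt C h), h, ident C (src C h)) \<in> indep C"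
    and idsqD: "\<forall>h\<in>mor D. (h, ident D (tgt D h), h, ident D (src D h)) \<in> indep D"
    and c_hom: "\<forall>X\<in>obj C. c X \<in> hom (grp F (termap C X)) (grp H (termap D (Fo X)))"
    and c_nat: "\<forall>h\<in>confined C. \<forall>a\<in>carrier (grp F (termap C (src C h))).
                  c (tgt C h) (bpush F h (termap C (tgt C h)) a) =
                  bpush H (Fm h) (termap D (Fo (tgt C h))) (c (src C h) a)"
    and c_one: "c (pt C) oneF = oneH"
    and Or_sub: "Or \<subseteq> obj C" and pt_Or: "pt C \<in> Or"
    and e_mem: "\<forall>Y\<in>Or. e Y \<in> carrier (grp F (termap C Y))"
    and e_orient: "\<forall>Y\<in>Or. strong_orientation D H (termap D (Fo Y)) (c Y (e Y))"
    and e_pt: "e (pt C) = oneF"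
    and \<gamma>_def: "\<forall>h. h \<in> allowable C \<and> tgt C h \<in> Or \<longrightarrow>
                  \<gamma> h \<in> hom (grp F h) (grp H (Fm h)) \<and>
                  (\<forall>a\<in>carrier (grp F h).
                     c (src C h) (bprod F h (termap C (tgt C h)) a (e (tgt C h))) =
                     bprod H (Fm h) (termap D (Fo (tgt C h))) (\<gamma> h a) (c (tgt C h) (e (tgt C h))))"
    and f: "f \<in> allowable C" and f_Or: "tgt C f \<in> Or"
    and \<alpha>: "\<alpha> \<in> carrier (grp F f)"
    and \<alpha>_prop: "\<forall>b\<in>carrier (grp F (termap C (tgt C f))).
                   c (src C f) (bprod F f (termap C (tgt C f)) \<alpha> b) =
                   bprod H (Fm f) (termap D (Fo (tgt C f))) (\<gamma> f \<alpha>) (c (tgt C f) b)"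
    and g: "g \<in> allowable C" and fg: "src C g = tgt C f" and g_Or: "tgt C g \<in> Or"
    and \<beta>: "\<beta> \<in> carrier (grp F g)"
  shows "\<gamma> (cmp C g f) (bprod F f g \<alpha> \<beta>) = bprod H (Fm f) (Fm g) (\<gamma> f \<alpha>) (\<gamma> g \<beta>)"
proof -
  let ?X = "src C f" and ?Y = "tgt C f" and ?Z = "tgt C g"
  let ?tZ = "termap C ?Z" and ?tY = "termap C ?Y"
  let ?dZ = "termap D (Fo ?Z)" and ?dY = "termap D (Fo ?Y)"
  have catC: "is_category C" and finC: "has_final_object C" and alC: "allowable_ok C"
    using C unfolding fm_category_def by auto
  have catD: "is_category D" and finD: "has_final_object D" and alD: "allowable_ok D"
    using D unfolding fm_category_def by auto
  have fm: "f \<in> mor C" and gm: "g \<in> mor C" using f g alC unfolding allowable_ok_def by auto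
  have objs: "?X \<in> obj C" "?Y \<in> obj C" "?Z \<in> obj C"
    using catC fm gm unfolding is_category_def by auto
  have gf_arr: "arr C (cmp C g f) ?X ?Z" using catC fm gm fg unfolding is_category_def by auto
  have gf_al: "cmp C g f \<in> allowable C" using alC f g fg unfolding allowable_ok_def by auto
  have tarrC: "\<And>W. W \<in> obj C \<Longrightarrow> arr C (termap C W) W (pt C)"
    using finC unfolding has_final_object_def termap_def by (metis theI')
  have tuniqC: "\<And>W m. W \<in> obj C \<Longrightarrow> arr C m W (pt C) \<Longrightarrow> m = termap C W"
    using finC tarrC unfolding has_final_object_def by metis
  have tarrD: "\<And>W. W \<in> obj D \<Longrightarrow> arr D (termap D W) W (pt D)"
    using finD unfolding has_final_object_def termap_def by (metis theI')
  have tuniqD: "\<And>W m. W \<in> obj D \<Longrightarrow> arr D m W (pt D) \<Longrightarrow> m = termap D W"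
    using finD tarrD unfolding has_final_object_def by metis
  have tZarr: "arr C ?tZ ?Z (pt C)" using tarrC objs by auto
  have tZg: "cmp C ?tZ g = ?tY"
  proof (rule tuniqC[OF objs(2)])
    show "arr C (cmp C ?tZ g) ?Y (pt C)" using catC tZarr gm fg unfolding is_category_def arr_def by auto
  qed
  have tZal: "?tZ \<in> allowable C" "?tY \<in> allowable C" using term_allowC objs by auto
  have Fobj: "Fo ?X \<in> obj D" "Fo ?Y \<in> obj D" "Fo ?Z \<in> obj D"
    using fun_resp objs unfolding respecting_functor_def by auto
  have Fmf: "arr D (Fm f) (Fo ?X) (Fo ?Y)" and Fmg: "arr D (Fm g) (Fo ?Y) (Fo ?Z)"
    using fun_resp fm gm fg unfolding respecting_functor_def by auto
  have Fmgf: "Fm (cmp C g f) = cmp D (Fm g) (Fm f)"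
    using fun_resp fm gm fg unfolding respecting_functor_def by auto
  have Fmal: "Fm f \<in> allowable D" "Fm g \<in> allowable D" "Fm (cmp C g f) \<in> allowable D"
    using fun_resp f g gf_al unfolding respecting_functor_def by auto
  have dZarr: "arr D ?dZ (Fo ?Z) (pt D)" using tarrD Fobj by auto
  have dZg: "cmp D ?dZ (Fm g) = ?dY"
  proof (rule tuniqD[OF Fobj(2)])
    show "arr D (cmp D ?dZ (Fm g)) (Fo ?Y) (pt D)" using catD dZarr Fmg unfolding is_category_def arr_def by auto
  qed
  have dZal: "?dZ \<in> allowable D" "?dY \<in> allowable D" using term_allowD Fobj by auto
  have Fprod: "\<forall>f\<in>allowable C. \<forall>g\<in>allowable C. tgt C f = src C g \<longrightarrow>
        (\<forall>a\<in>carrier (grp F f). \<forall>b\<in>carrier (grp F g). bprod F f g a b \<in> carrier (grp F (cmp C g f)))"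
    using F[unfolded pwbt_def, THEN conjunct2, THEN conjunct1] by blast
  have Fassoc: "\<forall>f\<in>allowable C. \<forall>g\<in>allowable C. \<forall>h\<in>allowable C.
        tgt C f = src C g \<and> tgt C g = src C h \<longrightarrow>
        (\<forall>a\<in>carrier (grp F f). \<forall>b\<in>carrier (grp F g). \<forall>c\<in>carrier (grp F h).
           bprod F (cmp C g f) h (bprod F f g a b) c = bprod F f (cmp C h g) a (bprod F g h b c))"
    using F[unfolded pwbt_def, THEN conjunct2, THEN conjunct2, THEN conjunct2, THEN conjunct2, THEN conjunct1] by blast
  have Hprod: "\<forall>f\<in>allowable D. \<forall>g\<in>allowable D. tgt D f = src D g \<longrightarrow>
        (\<forall>a\<in>carrier (grp H f). \<forall>b\<in>carrier (grp H g). bprod H f g a b \<in> carrier (grp H (cmp D g f)))"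
    using H[unfolded pwbt_def, THEN conjunct2, THEN conjunct1] by blast
  have Hassoc: "\<forall>f\<in>allowable D. \<forall>g\<in>allowable D. \<forall>h\<in>allowable D.
        tgt D f = src D g \<and> tgt D g = src D h \<longrightarrow>
        (\<forall>a\<in>carrier (grp H f). \<forall>b\<in>carrier (grp H g). \<forall>c\<in>carrier (grp H h).
           bprod H (cmp D g f) h (bprod H f g a b) c = bprod H f (cmp D h g) a (bprod H g h b c))"
    using H[unfolded pwbt_def, THEN conjunct2, THEN conjunct2, THEN conjunct2, THEN conjunct2, THEN conjunct1] by blast
  have eZ: "e ?Z \<in> carrier (grp F ?tZ)" using e_mem g_Or by auto
  have tZsrc: "src C ?tZ = ?Z" using tZarr unfolding arr_def by auto
  have dZsrc: "src D ?dZ = Fo ?Z" using dZarr unfolding arr_def by auto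
  have ab: "bprod F f g \<alpha> \<beta> \<in> carrier (grp F (cmp C g f))" using Fprod f g fg \<alpha> \<beta> by auto
  have be: "bprod F g ?tZ \<beta> (e ?Z) \<in> carrier (grp F ?tY)"
    using Fprod g tZal tZsrc \<beta> eZ tZg by force
  have \<gamma>gf: "\<gamma> (cmp C g f) \<in> hom (grp F (cmp C g f)) (grp H (Fm (cmp C g f)))"
    and \<gamma>gf_eq: "\<forall>a\<in>carrier (grp F (cmp C g f)).
                     c ?X (bprod F (cmp C g f) ?tZ a (e ?Z)) =
                     bprod H (Fm (cmp C g f)) ?dZ (\<gamma> (cmp C g f) a) (c ?Z (e ?Z))"
    using \<gamma>_def[rule_format, of "cmp C g f"] gf_al gf_arr g_Or unfolding arr_def by auto
  have \<gamma>g: "\<gamma> g \<in> hom (grp F g) (grp H (Fm g))"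
    and \<gamma>g_eq: "\<forall>a\<in>carrier (grp F g).
                     c ?Y (bprod F g ?tZ a (e ?Z)) =
                     bprod H (Fm g) ?dZ (\<gamma> g a) (c ?Z (e ?Z))"
    using \<gamma>_def[rule_format, of g] g g_Or fg by auto
  have \<gamma>f: "\<gamma> f \<in> hom (grp F f) (grp H (Fm f))"
    using \<gamma>_def[rule_format, of f] f f_Or by auto
  have ga: "\<gamma> f \<alpha> \<in> carrier (grp H (Fm f))" using \<gamma>f \<alpha> by (auto simp: hom_def)
  have gb: "\<gamma> g \<beta> \<in> carrier (grp H (Fm g))" using \<gamma>g \<beta> by (auto simp: hom_def)
  have gab: "\<gamma> (cmp C g f) (bprod F f g \<alpha> \<beta>) \<in> carrier (grp H (Fm (cmp C g f)))"
    using \<gamma>gf ab by (auto simp: hom_def)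
  have so: "strong_orientation D H ?dZ (c ?Z (e ?Z))" using e_orient g_Or by auto
  have ce: "c ?Z (e ?Z) \<in> carrier (grp H ?dZ)" using so unfolding strong_orientation_def by auto
  have gagb: "bprod H (Fm f) (Fm g) (\<gamma> f \<alpha>) (\<gamma> g \<beta>) \<in> carrier (grp H (Fm (cmp C g f)))"
    using Hprod Fmal Fmf Fmg ga gb Fmgf unfolding arr_def by auto
  have "c ?X (bprod F (cmp C g f) ?tZ (bprod F f g \<alpha> \<beta>) (e ?Z))
        = c ?X (bprod F f ?tY \<alpha> (bprod F g ?tZ \<beta> (e ?Z)))"
    using Fassoc f g tZal fg tZsrc \<alpha> \<beta> eZ tZg by force
  also have "\<dots> = bprod H (Fm f) ?dY (\<gamma> f \<alpha>) (c ?Y (bprod F g ?tZ \<beta> (e ?Z)))"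
    using \<alpha>_prop be by auto
  also have "\<dots> = bprod H (Fm f) ?dY (\<gamma> f \<alpha>) (bprod H (Fm g) ?dZ (\<gamma> g \<beta>) (c ?Z (e ?Z)))"
    using \<gamma>g_eq \<beta> by auto
  also have "\<dots> = bprod H (Fm (cmp C g f)) ?dZ (bprod H (Fm f) (Fm g) (\<gamma> f \<alpha>) (\<gamma> g \<beta>)) (c ?Z (e ?Z))"
    using Hassoc Fmal dZal Fmf Fmg dZsrc ga gb ce dZg Fmgf unfolding arr_def by force
  finally have eq1: "c ?X (bprod F (cmp C g f) ?tZ (bprod F f g \<alpha> \<beta>) (e ?Z)) =
      bprod H (Fm (cmp C g f)) ?dZ (bprod H (Fm f) (Fm g) (\<gamma> f \<alpha>) (\<gamma> g \<beta>)) (c ?Z (e ?Z))" .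
  have eq2: "bprod H (Fm (cmp C g f)) ?dZ (\<gamma> (cmp C g f) (bprod F f g \<alpha> \<beta>)) (c ?Z (e ?Z)) =
      bprod H (Fm (cmp C g f)) ?dZ (bprod H (Fm f) (Fm g) (\<gamma> f \<alpha>) (\<gamma> g \<beta>)) (c ?Z (e ?Z))"
    using eq1 \<gamma>gf_eq ab by auto
  have tgtgf: "tgt D (Fm (cmp C g f)) = src D ?dZ" using Fmgf Fmf Fmg catD dZsrc
    unfolding is_category_def arr_def by auto
  have "(\<lambda>a. bprod H (Fm (cmp C g f)) ?dZ a (c ?Z (e ?Z))) \<in> iso (grp H (Fm (cmp C g f))) (grp H (cmp D ?dZ (Fm (cmp C g f))))"
    using so Fmal(3) tgtgf unfolding strong_orientation_def by auto
  then have "inj_on (\<lambda>a. bprod H (Fm (cmp C g f)) ?dZ a (c ?Z (e ?Z))) (carrier (grp H (Fm (cmp C g f))))"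
    unfolding iso_def bij_betw_def by auto
  then show ?thesis using eq2 gab gagb Fmgf unfolding inj_on_def by auto
qed

end
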